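(* Let $m,n$ be positive integers and let $m=p_1^{k_1}\cdots p_r^{k_r}$ be the prime factorization of $m$. If $p_1,\dots,p_r$ are odd and none of them is a Wieferich prime, then $$P(m,n)=\mathrm{lcm}\left(p_1^{k_1-1}P(p_1,n),\dots,p_r^{k_r-1}P(p_r,n)\right).$$
   Context: For positive integers $m,n$, let $\mathbf{Z}_m$ be the integers modulo $m$ and $T:\mathbf{Z}_m^n\to\mathbf{Z}_m^n$, $T(a_0,\dots,a_{n-1})=(a_0+a_1,a_1+a_2,\dots,a_{n-2}+a_{n-1},a_{n-1}+a_0)$. For $\mathbf{a}\in\mathbf{Z}_m^n$ the sequence $(T^k\mathbf{a})_{k\ge0}$ is eventually periodic; its cycle length is the smallest positive integer $P$ such that there is $N$ with $T^{k+P}\mathbf{a}=T^k\mathbf{a}$ for all $k\ge N$. $P(m,n)$ denotes the maximum of the cycle lengths of $(T^k\mathbf{a})_{k\ge0}$ over all $\mathbf{a}\in\mathbf{Z}_m^n$. A prime $p$ is a Wieferich prime if $2^{p-1}\equiv1\pmod{p^2}$. *)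

theory Defs
  imports "HOL-Number_Theory.Number_Theory"
begin

(* Elements of Z_m^n are represented as functions a :: nat => nat with
   a i < m for i < n (residues 0..m-1) and a i = 0 for i >= n. *)
definition vecs :: "nat \<Rightarrow> nat \<Rightarrow> (nat \<Rightarrow> nat) set" where
  "vecs m n = {a. (\<forall>i<n. a i < m) \<and> (\<forall>i\<ge>n. a i = 0)}"

definition Tmap :: "nat \<Rightarrow> nat \<Rightarrow> (nat \<Rightarrow> nat) \<Rightarrow> (nat \<Rightarrow> nat)" where
  "Tmap m n a = (\<lambda>i. if i < n then (a i + a ((i + 1) mod n)) mod m else 0)"

definition cycle_len :: "nat \<Rightarrow> nat \<Rightarrow> (nat \<Rightarrow> nat) \<Rightarrow> nat" where
  "cycle_len m n a = (LEAST P. 0 < P \<and>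
      (\<exists>N. \<forall>k\<ge>N. (Tmap m n ^^ (k + P)) a = (Tmap m n ^^ k) a))"

definition Pmax :: "nat \<Rightarrow> nat \<Rightarrow> nat" where
  "Pmax m n = Max (cycle_len m n ` vecs m n)"

definition wieferich :: "nat \<Rightarrow> bool" where
  "wieferich p \<longleftrightarrow> prime p \<and> [2 ^ (p - 1) = 1] (mod p^2)"

end

theory Submission
  imports Defs "HOL-Computational_Algebra.Polynomial"
begin

definition Xp :: "nat \<Rightarrow> int poly" where "Xp d = monom 1 d - 1"
definition inI :: "int \<Rightarrow> nat \<Rightarrow> int poly \<Rightarrow> bool" where
  "inI M d f \<longleftrightarrow> (\<exists>a b. f = smult M a + Xp d * b)"

lemma inI_0[simp]: "inI M d 0"
  unfolding inI_def by (rule exI[of _ 0], rule exI[of _ 0]) simp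

lemma inI_add: "inI M d f \<Longrightarrow> inI M d g \<Longrightarrow> inI M d (f + g)"
proof -
  assume "inI M d f" "inI M d g"
  then obtain a b a' b' where "f = smult M a + Xp d * b" "g = smult M a' + Xp d * b'"
    unfolding inI_def by blast
  then have "f + g = smult M (a + a') + Xp d * (b + b')" by (simp add: algebra_simps smult_add_right)
  then show ?thesis unfolding inI_def by blast
qed

lemma inI_uminus: "inI M d f \<Longrightarrow> inI M d (- f)"
proof -
  assume "inI M d f"
  then obtain a b where "f = smult M a + Xp d * b" unfolding inI_def by blast
  then have "- f = smult M (-a) + Xp d * (-b)" by simp
  then show ?thesis unfolding inI_def by blast
qed

lemma inI_diff: "inI M d f \<Longrightarrow> inI M d g \<Longrightarrow> inI M d (f - g)"
  using inI_add[of M d f "-g"] inI_uminus by simp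

lemma inI_mult_left: "inI M d f \<Longrightarrow> inI M d (g * f)"
  unfolding inI_def
proof (elim exE)
  fix a b assume "f = smult M a + Xp d * b"
  then have "g * f = smult M (g * a) + Xp d * (g * b)" by (simp add: algebra_simps)
  then show "\<exists>a b. g * f = smult M a + Xp d * b" by blast
qed

lemma inI_mult_right: "inI M d f \<Longrightarrow> inI M d (f * g)"
  using inI_mult_left[of M d f g] by (simp add: mult.commute)

lemma inI_smult: "inI M d f \<Longrightarrow> inI M d (smult k f)"
  using inI_mult_left[of M d f "[:k:]"] by simp

lemma inI_Xp: "inI M d (Xp d * b)"
  unfolding inI_def by (rule exI[of _ 0]) auto

lemma inI_smultM: "inI M d (smult M g)"
  unfolding inI_def by (rule exI[of _ g], rule exI[of _ 0]) simp

lemma inI_one: "inI 1 d f"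
  using inI_smultM[of 1 d f] by simp

lemma inI_sum: "finite S \<Longrightarrow> (\<And>i. i \<in> S \<Longrightarrow> inI M d (F i)) \<Longrightarrow> inI M d (\<Sum>i\<in>S. F i)"
  by (induction S rule: finite_induct) (auto intro: inI_add)

lemma inI_mult: "inI A d f \<Longrightarrow> inI B d g \<Longrightarrow> inI (A * B) d (f * g)"
proof -
  assume "inI A d f" "inI B d g"
  then obtain a b a' b' where f: "f = smult A a + Xp d * b" and g: "g = smult B a' + Xp d * b'"
    unfolding inI_def by blast
  have "f * g = smult (A*B) (a*a') + Xp d * (smult A a * b' + b * g)"
    unfolding f g by (simp add: algebra_simps)
  then show ?thesis unfolding inI_def by blast
qed

lemma inI_power: "inI A d f \<Longrightarrow> inI (A ^ k) d (f ^ k)"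
  by (induction k) (auto simp: inI_one intro: inI_mult)

lemma inI_dvd: "B dvd A \<Longrightarrow> inI A d f \<Longrightarrow> inI B d f"
proof -
  assume "B dvd A" "inI A d f"
  then obtain r where r: "A = B * r" by (auto elim: dvdE)
  from \<open>inI A d f\<close> obtain a b where "f = smult A a + Xp d * b" unfolding inI_def by blast
  then have "f = smult B (smult r a) + Xp d * b" by (simp add: r)
  then show ?thesis unfolding inI_def by blast
qed

lemma inI_smult2: "inI A d f \<Longrightarrow> inI (B * A) d (smult B f)"
  using inI_mult[of B d "[:B:]" A f] inI_smultM[of B d 1] by simp

lemma dvd_pow_sub_one: "(x::'a::comm_ring_1) - 1 dvd x ^ q - 1"
proof (induction q)
  case (Suc q)
  have "x ^ Suc q - 1 = x * (x ^ q - 1) + (x - 1)" by (simp add: algebra_simps)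
  then show ?case using Suc by (metis dvd_add dvd_mult dvd_refl)
qed simp

lemma Xp_dvd: "d' dvd d \<Longrightarrow> Xp d' dvd Xp d"
proof -
  assume "d' dvd d" then obtain q where "d = d' * q" by blast
  then have "monom (1::int) d = (monom 1 d') ^ q" by (simp add: monom_power)
  then show ?thesis unfolding Xp_def by (metis dvd_pow_sub_one)
qed

lemma inI_d_dvd: "d' dvd d \<Longrightarrow> inI M d f \<Longrightarrow> inI M d' f"
proof -
  assume "d' dvd d" "inI M d f"
  then obtain r where r: "Xp d = Xp d' * r" using Xp_dvd by blast
  from \<open>inI M d f\<close> obtain a b where "f = smult M a + Xp d * b" unfolding inI_def by blast
  then have "f = smult M a + Xp d' * (r * b)" by (simp add: r mult.assoc)
  then show ?thesis unfolding inI_def by blast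
qed

lemma inI_coprime: "coprime A B \<Longrightarrow> inI A d f \<Longrightarrow> inI B d f \<Longrightarrow> inI (A * B) d f"
proof -
  assume "coprime A B" "inI A d f" "inI B d f"
  obtain u v where uv: "u * A + v * B = gcd A B" using bezout_int by blast
  with \<open>coprime A B\<close> have uv1: "u * A + v * B = 1" by simp
  have "f = smult (u * A + v * B) f" using uv1 by simp
  also have "\<dots> = smult u (smult A f) + smult v (smult B f)" by (simp add: smult_add_left)
  finally have f: "f = smult u (smult A f) + smult v (smult B f)" .
  have "inI (B * A) d (smult B f)" using inI_smult2[OF \<open>inI A d f\<close>] .
  then have "inI (A * B) d (smult B f)" by (simp add: mult.commute)
  then have 1: "inI (A * B) d (smult v (smult B f))" by (rule inI_smult)
  have "inI (A * B) d (smult A f)" using inI_smult2[OF \<open>inI B d f\<close>] .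
  then have 2: "inI (A * B) d (smult u (smult A f))" by (rule inI_smult)
  show ?thesis by (subst f) (rule inI_add[OF 2 1])
qed

lemma coeff_Xp_mult_shift: "coeff (Xp d * b) (i + d) = coeff b i - coeff b (i + d)"
proof -
  have "coeff (monom 1 d * b) (i + d) = coeff b i" by (simp add: coeff_monom_mult)
  then show ?thesis unfolding Xp_def by (simp add: left_diff_distrib)
qed

lemma coeff_chain:
  assumes "\<And>i. M dvd coeff (Xp d * b) (i + d)"
  shows "M dvd coeff b i - coeff b (i + d * k)"
proof (induction k arbitrary: i)
  case 0 then show ?case by simp
next
  case (Suc k)
  have "M dvd coeff b i - coeff b (i + d)" using assms[of i] by (simp add: coeff_Xp_mult_shift)
  moreover have "M dvd coeff b (i + d) - coeff b (i + d + d * k)" using Suc .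
  ultimately have "M dvd (coeff b i - coeff b (i + d)) + (coeff b (i + d) - coeff b (i + d + d * k))"
    by (rule dvd_add)
  then show ?case by (simp add: algebra_simps)
qed

lemma coeff_all_dvd:
  assumes "d \<ge> 1" "\<And>i. M dvd coeff (Xp d * b) (i + d)"
  shows "M dvd coeff b i"
proof -
  have "M dvd coeff b i - coeff b (i + d * (degree b + 1))" by (rule coeff_chain[OF assms(2)])
  moreover have "coeff b (i + d * (degree b + 1)) = 0"
  proof (rule coeff_eq_0)
    have "degree b + 1 \<le> d * (degree b + 1)" using assms(1) by (metis mult_1 mult_le_mono1)
    then show "degree b < i + d * (degree b + 1)" by linarith
  qed
  ultimately show ?thesis by simp
qed

lemma all_dvd_smult: "(\<And>i. M dvd coeff (b::int poly) i) \<Longrightarrow> b = smult M (map_poly (\<lambda>x. x div M) b)"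
proof (rule poly_eqI)
  fix n assume "\<And>i. M dvd coeff b i"
  then have "M dvd coeff b n" by blast
  then show "coeff b n = coeff (smult M (map_poly (\<lambda>x. x div M) b)) n"
  proof -
    have "coeff (map_poly (\<lambda>x. x div M) b) n = coeff b n div M" by (rule coeff_map_poly) simp
    then show ?thesis using \<open>M dvd coeff b n\<close> by simp
  qed
qed

lemma read_off:
  assumes "inI M d f" "d \<ge> 1" "degree f < d"
  shows "M dvd coeff f i"
proof -
  obtain a b where f: "f = smult M a + Xp d * b" using assms(1) unfolding inI_def by blast
  have "M dvd coeff (Xp d * b) (j + d)" for j
  proof -
    have "coeff f (j + d) = 0" using assms(3) by (simp add: coeff_eq_0)
    then have "coeff (Xp d * b) (j + d) = - (M * coeff a (j + d))" unfolding f by simp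
    then show ?thesis by simp
  qed
  then have "M dvd coeff b j" for j using coeff_all_dvd assms(2) by blast
  then obtain b' where "b = smult M b'" using all_dvd_smult by blast
  then have "f = smult M (a + Xp d * b')" unfolding f by (simp add: smult_add_right)
  then show ?thesis by simp
qed

lemma inI_cancel:
  assumes "inI (p * A) d (smult p f)" "d \<ge> 1" "p \<noteq> 0"
  shows "inI A d f"
proof -
  obtain a b where f: "smult p f = smult (p * A) a + Xp d * b" using assms(1) unfolding inI_def by blast
  have "p dvd coeff (Xp d * b) j" for j
  proof -
    have "coeff (Xp d * b) j = coeff (smult p f) j - coeff (smult (p*A) a) j" unfolding f by simp
    also have "\<dots> = p * (coeff f j - A * coeff a j)" by (simp add: algebra_simps)
    finally show ?thesis by simp
  qed
  then have "p dvd coeff b j" for j using coeff_all_dvd assms(2) by blast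
  then obtain b' where b: "b = smult p b'" using all_dvd_smult by blast
  have "smult p f = smult p (smult A a + Xp d * b')" unfolding f b by (simp add: smult_add_right)
  then have "f = smult A a + Xp d * b'" using assms(3) by (metis smult_cancel)
  then show ?thesis unfolding inI_def by blast
qed

lemma inI_eval1: "inI M 1 f \<Longrightarrow> M dvd poly f 1"
  unfolding inI_def Xp_def by (auto simp: poly_monom)

lemma binom_split:
  fixes t b :: "'a::comm_semiring_1"
  assumes "s \<ge> 1"
  shows "(t + b) ^ s = (\<Sum>k\<in>{2..s}. of_nat (s choose k) * t ^ k * b ^ (s - k)) + of_nat s * t * b ^ (s - 1) + b ^ s"
proof -
  have S: "{..s} = insert 0 (insert 1 {2..s})" using assms by auto
  have "(t + b) ^ s = (\<Sum>k\<le>s. of_nat (s choose k) * t ^ k * b ^ (s - k))" by (rule binomial_ring)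
  also have "\<dots> = b ^ s + (of_nat s * t * b ^ (s - 1) + (\<Sum>k\<in>{2..s}. of_nat (s choose k) * t ^ k * b ^ (s - k)))"
    unfolding S by (simp add: sum.insert)
  finally show ?thesis by (simp add: algebra_simps)
qed

lemma inI_pow_le: "k \<le> l \<Longrightarrow> inI (P ^ l) d f \<Longrightarrow> inI (P ^ k) d f"
  by (rule inI_dvd[OF le_imp_power_dvd])

lemma inI_ofnat_mult: "int q dvd int N \<Longrightarrow> inI A d X \<Longrightarrow> inI (int q * A) d (of_nat N * X)"
proof -
  assume "int q dvd int N" "inI A d X"
  then obtain r where r: "int N = int q * r" by blast
  have "(of_nat N :: int poly) * X = smult (int N) X" by (simp add: of_nat_poly)
  also have "\<dots> = smult (int q) (smult r X)" by (simp add: r)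
  finally show ?thesis using inI_smult2[OF inI_smult[OF \<open>inI A d X\<close>, of r], of "int q"] by simp
qed

lemma inI_H2:
  assumes "inI (P ^ j) d t"
  shows "inI (P ^ (2 * j)) d ((t + b) ^ s - b ^ s - of_nat s * t * b ^ (s - 1))"
proof (cases "s = 0")
  case True then show ?thesis by simp
next
  case False
  then have "(t + b) ^ s - b ^ s - of_nat s * t * b ^ (s - 1) =
      (\<Sum>k\<in>{2..s}. of_nat (s choose k) * t ^ k * b ^ (s - k))"
    using binom_split[of s t b] by simp
  also have "inI (P ^ (2 * j)) d \<dots>"
  proof (rule inI_sum)
    fix k assume k: "k \<in> {2..s}"
    have "inI ((P ^ j) ^ k) d (t ^ k)" by (rule inI_power[OF assms])
    then have "inI (P ^ (j * k)) d (t ^ k)" by (simp add: power_mult)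
    moreover have "2 * j \<le> j * k" using k by simp
    ultimately have "inI (P ^ (2 * j)) d (t ^ k)" using inI_pow_le by blast
    then show "inI (P ^ (2 * j)) d (of_nat (s choose k) * t ^ k * b ^ (s - k))"
      by (simp add: inI_mult_left inI_mult_right mult.assoc)
  qed simp
  finally show ?thesis .
qed

lemma inI_H:
  assumes q: "prime q" "q \<ge> 3" and j: "j \<ge> 1" and t: "inI (int q ^ j) d t"
  shows "inI (int q ^ (j + 2)) d ((t + b) ^ q - b ^ q - of_nat q * t * b ^ (q - 1))"
proof -
  have q1: "q \<ge> 1" using q by simp
  have S: "{2..q} = insert q {2..<q}" using q by auto
  have "(t + b) ^ q - b ^ q - of_nat q * t * b ^ (q - 1) =
      (\<Sum>k\<in>{2..q}. of_nat (q choose k) * t ^ k * b ^ (q - k))"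
    using binom_split[OF q1, of t b] by simp
  also have "\<dots> = t ^ q + (\<Sum>k\<in>{2..<q}. of_nat (q choose k) * t ^ k * b ^ (q - k))"
    unfolding S by (simp add: sum.insert)
  also have "inI (int q ^ (j + 2)) d \<dots>"
  proof (rule inI_add)
    have "inI ((int q ^ j) ^ q) d (t ^ q)" by (rule inI_power[OF t])
    then have "inI (int q ^ (j * q)) d (t ^ q)" by (simp add: power_mult)
    moreover have "j + 2 \<le> j * q"
    proof -
      have "j * 3 \<le> j * q" using q by simp
      then show ?thesis using j by linarith
    qed
    ultimately show "inI (int q ^ (j + 2)) d (t ^ q)" using inI_pow_le by blast
  next
    show "inI (int q ^ (j + 2)) d (\<Sum>k\<in>{2..<q}. of_nat (q choose k) * t ^ k * b ^ (q - k))"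
    proof (rule inI_sum)
      fix k assume k: "k \<in> {2..<q}"
      have "inI ((int q ^ j) ^ k) d (t ^ k)" by (rule inI_power[OF t])
      then have "inI (int q ^ (j * k)) d (t ^ k)" by (simp add: power_mult)
      moreover have "j + 1 \<le> j * k"
      proof -
        have "j * 2 \<le> j * k" using k by simp
        then show ?thesis using j by linarith
      qed
      ultimately have "inI (int q ^ (j + 1)) d (t ^ k)" using inI_pow_le by blast
      then have "inI (int q ^ (j + 1)) d (t ^ k * b ^ (q - k))" by (rule inI_mult_right)
      moreover have "int q dvd int (q choose k)" using dvd_choose_prime[of k q] k q by auto
      ultimately have "inI (int q * int q ^ (j + 1)) d (of_nat (q choose k) * (t ^ k * b ^ (q - k)))"
        using inI_ofnat_mult by blast
      then show "inI (int q ^ (j + 2)) d (of_nat (q choose k) * t ^ k * b ^ (q - k))"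
        by (simp add: mult.assoc)
    qed simp
  qed
  finally show ?thesis .
qed

lemma inI_G:
  assumes q: "prime q" "q \<ge> 3" and j: "j \<ge> 1" and t: "inI (int q ^ j) d t"
  shows "inI (int q ^ (j + 1)) d ((t + b) ^ q - b ^ q)"
proof -
  have 1: "inI (int q ^ (j + 1)) d ((t + b) ^ q - b ^ q - of_nat q * t * b ^ (q - 1))"
    by (rule inI_pow_le[of "j+1" "j+2", OF _ inI_H[OF q j t]]) simp
  have "inI (int q * int q ^ j) d (of_nat q * (t * b ^ (q - 1)))"
    by (rule inI_ofnat_mult) (auto intro: inI_mult_right t)
  then have 2: "inI (int q ^ (j + 1)) d (of_nat q * t * b ^ (q - 1))" by (simp add: mult.assoc)
  show ?thesis using inI_add[OF 1 2] by simp
qed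

lemma inI_Frob:
  assumes q: "prime q"
  shows "inI (int q) d ((1 + y) ^ q - 1 - y ^ q)"
proof -
  have q1: "q \<ge> 1" using q prime_ge_1_nat by blast
  have S: "{2..q} = insert q {2..<q}" using q prime_ge_2_nat[OF q] by auto
  have "(y + 1) ^ q = (\<Sum>k\<in>{2..q}. of_nat (q choose k) * y ^ k * 1 ^ (q - k)) + of_nat q * y * 1 ^ (q - 1) + 1 ^ q"
    by (rule binom_split[OF q1])
  also have "\<dots> = y ^ q + (\<Sum>k\<in>{2..<q}. of_nat (q choose k) * y ^ k) + of_nat q * y + 1"
    unfolding S by (simp add: sum.insert)
  finally have "(1 + y) ^ q - 1 - y ^ q = (\<Sum>k\<in>{2..<q}. of_nat (q choose k) * y ^ k) + of_nat q * y"
    by (simp add: add.commute)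
  also have "inI (int q) d \<dots>"
  proof (rule inI_add)
    show "inI (int q) d (\<Sum>k\<in>{2..<q}. of_nat (q choose k) * y ^ k)"
    proof (rule inI_sum)
      fix k assume k: "k \<in> {2..<q}"
      have "int q dvd int (q choose k)" using dvd_choose_prime[of k q] k q by auto
      then show "inI (int q) d (of_nat (q choose k) * y ^ k)"
        using inI_ofnat_mult[of q "q choose k" 1 d "y ^ k"] by (simp add: inI_one)
    qed simp
    show "inI (int q) d (of_nat q * y)"
      using inI_ofnat_mult[of q q 1 d y] by (simp add: inI_one)
  qed
  finally show ?thesis .
qed

definition cc :: "int poly" where "cc = [:1, 1:]"
definition Dp :: "nat \<Rightarrow> int \<Rightarrow> nat \<Rightarrow> bool" where
  "Dp n M P \<longleftrightarrow> (\<exists>N. inI M n (cc ^ N * (cc ^ P - 1)))"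
definition per :: "nat \<Rightarrow> int \<Rightarrow> nat" where
  "per n M = (LEAST P. 0 < P \<and> Dp n M P)"

lemma inI_mono_N: "inI M n (cc ^ N * u) \<Longrightarrow> N \<le> N' \<Longrightarrow> inI M n (cc ^ N' * u)"
proof -
  assume "inI M n (cc ^ N * u)" "N \<le> N'"
  then have "inI M n (cc ^ (N' - N) * (cc ^ N * u))" using inI_mult_left by blast
  moreover have "cc ^ (N' - N) * (cc ^ N * u) = cc ^ N' * u"
    using \<open>N \<le> N'\<close> by (simp add: mult.assoc[symmetric] power_add[symmetric])
  ultimately show ?thesis by simp
qed

lemma Dp_0: "Dp n M 0"
  unfolding Dp_def by auto

lemma Dp_mult: "Dp n M P \<Longrightarrow> Dp n M (P * K)"
proof -
  assume "Dp n M P"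
  then obtain N where N: "inI M n (cc ^ N * (cc ^ P - 1))" unfolding Dp_def by blast
  have "cc ^ P - 1 dvd (cc ^ P) ^ K - 1" by (rule dvd_pow_sub_one)
  then obtain r where "(cc ^ P) ^ K - 1 = (cc ^ P - 1) * r" by blast
  then have "cc ^ N * (cc ^ (P * K) - 1) = (cc ^ N * (cc ^ P - 1)) * r"
    by (simp add: power_mult mult.assoc)
  then show ?thesis unfolding Dp_def using inI_mult_right[OF N] by metis
qed

lemma Dp_sub: "Dp n M P \<Longrightarrow> Dp n M (P + Q) \<Longrightarrow> Dp n M Q"
proof -
  assume "Dp n M P" "Dp n M (P + Q)"
  then obtain N N' where N: "inI M n (cc ^ N * (cc ^ P - 1))"
    and N': "inI M n (cc ^ N' * (cc ^ (P + Q) - 1))" unfolding Dp_def by blast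
  have "cc ^ (N + N') * (cc ^ Q - 1) = cc ^ N * (cc ^ N' * (cc ^ (P + Q) - 1)) - (cc ^ N' * cc ^ Q) * (cc ^ N * (cc ^ P - 1))"
    by (simp add: algebra_simps power_add)
  moreover have "inI M n (cc ^ N * (cc ^ N' * (cc ^ (P + Q) - 1)) - (cc ^ N' * cc ^ Q) * (cc ^ N * (cc ^ P - 1)))"
    by (intro inI_diff inI_mult_left N N')
  ultimately show ?thesis unfolding Dp_def by metis
qed

lemma Dp_dvd_mod: "B dvd A \<Longrightarrow> Dp n A P \<Longrightarrow> Dp n B P"
  unfolding Dp_def using inI_dvd by blast

lemma per_props:
  assumes "\<exists>P>0. Dp n M P"
  shows "0 < per n M" "Dp n M (per n M)" "Dp n M P \<longleftrightarrow> per n M dvd P"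
proof -
  have L: "0 < per n M \<and> Dp n M (per n M)"
    unfolding per_def using assms by (metis (mono_tags, lifting) LeastI)
  then show "0 < per n M" "Dp n M (per n M)" by auto
  show "Dp n M P \<longleftrightarrow> per n M dvd P"
  proof
    assume "per n M dvd P"
    then obtain K where "P = per n M * K" by blast
    then show "Dp n M P" using Dp_mult[OF L[THEN conjunct2]] by simp
  next
    assume D: "Dp n M P"
    define r where "r = P mod per n M"
    have "P = per n M * (P div per n M) + r" unfolding r_def by simp
    then have "Dp n M (per n M * (P div per n M) + r)" using D by simp
    then have Dr: "Dp n M r" using Dp_sub Dp_mult[OF L[THEN conjunct2]] by blast
    have "r < per n M" unfolding r_def using L by simp
    then have "\<not> (0 < r \<and> Dp n M r)" unfolding per_def using not_less_Least by blast
    with Dr have "r = 0" by simp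
    then show "per n M dvd P" unfolding r_def by (simp add: dvd_eq_mod_eq_0)
  qed
qed

lemma Dp_common_N:
  assumes "finite S" "\<forall>s\<in>S. Dp n (g s) P"
  shows "\<exists>N. \<forall>s\<in>S. inI (g s) n (cc ^ N * (cc ^ P - 1))"
proof -
  from assms(2) have "\<forall>s\<in>S. \<exists>N. inI (g s) n (cc ^ N * (cc ^ P - 1))" unfolding Dp_def by blast
  then obtain Nf where Nf: "\<forall>s\<in>S. inI (g s) n (cc ^ Nf s * (cc ^ P - 1))" by metis
  have "\<forall>s\<in>S. inI (g s) n (cc ^ (\<Sum>s\<in>S. Nf s) * (cc ^ P - 1))"
  proof
    fix s assume "s \<in> S"
    then have "Nf s \<le> (\<Sum>s\<in>S. Nf s)" using assms(1) by (intro member_le_sum) auto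
    then show "inI (g s) n (cc ^ (\<Sum>s\<in>S. Nf s) * (cc ^ P - 1))" using Nf \<open>s \<in> S\<close> inI_mono_N by blast
  qed
  then show ?thesis by blast
qed

lemma inI_prod_coprime:
  assumes "finite S" "\<forall>s\<in>S. \<forall>s'\<in>S. s \<noteq> s' \<longrightarrow> coprime (g s) (g s')" "\<forall>s\<in>S. inI (g s) d f"
  shows "inI (\<Prod>s\<in>S. g s) d f"
  using assms
proof (induction S rule: finite_induct)
  case empty then show ?case by (simp add: inI_one)
next
  case (insert x S)
  have "coprime (g x) (\<Prod>s\<in>S. g s)"
    using insert by (intro prod_coprime_right) auto
  moreover have "inI (\<Prod>s\<in>S. g s) d f" using insert by auto
  ultimately have "inI (g x * (\<Prod>s\<in>S. g s)) d f" using inI_coprime insert by auto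
  then show ?case using insert by simp
qed

lemma Dp_prod_coprime:
  assumes "finite S" "\<forall>s\<in>S. \<forall>s'\<in>S. s \<noteq> s' \<longrightarrow> coprime (g s) (g s')" "\<forall>s\<in>S. Dp n (g s) P"
  shows "Dp n (\<Prod>s\<in>S. g s) P"
proof -
  obtain N where "\<forall>s\<in>S. inI (g s) n (cc ^ N * (cc ^ P - 1))" using Dp_common_N[OF assms(1,3)] by blast
  then show ?thesis unfolding Dp_def using inI_prod_coprime[OF assms(1,2)] by blast
qed

lemma of_nat_poly_mult: "(of_nat k :: int poly) * x = smult (int k) x"
  by (simp add: of_nat_poly)

lemma Lift1:
  assumes q: "prime q" "q \<ge> 3" and j: "j \<ge> 1" and t: "inI (int q ^ j) d (a * u)"
  shows "inI (int q ^ (j + 1)) d (a ^ q * ((1 + u) ^ q - 1))"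
proof -
  have "inI (int q ^ (j + 1)) d ((a * u + a) ^ q - a ^ q)" by (rule inI_G[OF q j t])
  moreover have "(a * u + a) ^ q - a ^ q = a ^ q * ((1 + u) ^ q - 1)"
    by (simp add: algebra_simps power_mult_distrib[symmetric])
  ultimately show ?thesis by simp
qed

lemma Lift2:
  assumes q: "prime q" "q \<ge> 3" and j: "j \<ge> 1" and t: "inI (int q ^ j) d (a * u)"
  shows "inI (int q ^ (j + 2)) d (a ^ q * ((1 + u) ^ q - 1) - smult (int q) (a ^ q * u))"
proof -
  have "inI (int q ^ (j + 2)) d ((a * u + a) ^ q - a ^ q - of_nat q * (a * u) * a ^ (q - 1))"
    by (rule inI_H[OF q j t])
  moreover have "(a * u + a) ^ q - a ^ q = a ^ q * ((1 + u) ^ q - 1)"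
    by (simp add: algebra_simps power_mult_distrib[symmetric])
  moreover have "of_nat q * (a * u) * a ^ (q - 1) = smult (int q) (a ^ q * u)"
  proof -
    obtain q' where q': "q = Suc q'" using q by (cases q) auto
    have "of_nat q * (a * u) * a ^ (q - 1) = of_nat q * ((a * a ^ (q - 1)) * u)" by (simp only: ac_simps)
    also have "a * a ^ (q - 1) = a ^ q" unfolding q' by simp
    finally show ?thesis by (simp only: of_nat_poly_mult)
  qed
  ultimately show ?thesis by simp
qed

lemma cc_pow_p: "(cc ^ (Q * q ^ i)) ^ q = cc ^ (Q * q ^ Suc i)"
proof -
  have "Q * q ^ Suc i = Q * q ^ i * q" by simp
  then show ?thesis by (simp only: power_mult)
qed

lemma cc_lift_eq: "(cc ^ N) ^ q * ((1 + (cc ^ (Q * q ^ i) - 1)) ^ q - 1) = cc ^ (N * q) * (cc ^ (Q * q ^ Suc i) - 1)"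
proof -
  have a: "1 + (cc ^ (Q * q ^ i) - 1) = cc ^ (Q * q ^ i)" by simp
  have b: "(cc ^ N) ^ q = cc ^ (N * q)" by (simp add: power_mult)
  show ?thesis by (simp only: a b cc_pow_p)
qed

lemma lift_all:
  assumes q: "prime q" "q \<ge> 3" and D: "Dp n (int q) Q"
  shows "\<exists>N. inI (int q ^ (i + 1)) n (cc ^ N * (cc ^ (Q * q ^ i) - 1))"
proof (induction i)
  case 0 then show ?case using D unfolding Dp_def by simp
next
  case (Suc i)
  then obtain N where N: "inI (int q ^ (i + 1)) n (cc ^ N * (cc ^ (Q * q ^ i) - 1))" by blast
  have "inI (int q ^ (i + 1 + 1)) n ((cc ^ N) ^ q * ((1 + (cc ^ (Q * q ^ i) - 1)) ^ q - 1))"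
    by (rule Lift1[OF q _ N]) simp
  then have "inI (int q ^ (Suc i + 1)) n (cc ^ (N * q) * (cc ^ (Q * q ^ Suc i) - 1))"
    by (simp only: cc_lift_eq) simp
  then show ?case by blast
qed

lemma Dp_lift:
  assumes q: "prime q" "q \<ge> 3" and D: "Dp n (int q) Q" and k: "k \<ge> 1"
  shows "Dp n (int q ^ k) (Q * q ^ (k - 1))"
  using lift_all[OF q D, of "k - 1"] k unfolding Dp_def by simp

lemma Dp_descent1:
  assumes q: "prime q" "q \<ge> 3" and D: "Dp n (int q) Q" and n: "n \<ge> 1"
    and H: "Dp n (int q ^ (i + 3)) (Q * q ^ (i + 1))"
  shows "Dp n (int q ^ (i + 2)) (Q * q ^ i)"
proof -
  obtain N where N: "inI (int q ^ (i + 1)) n (cc ^ N * (cc ^ (Q * q ^ i) - 1))"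
    using lift_all[OF q D] by blast
  obtain N' where N': "inI (int q ^ (i + 3)) n (cc ^ N' * (cc ^ (Q * q ^ (i + 1)) - 1))"
    using H unfolding Dp_def by blast
  let ?u = "cc ^ (Q * q ^ i) - 1"
  have "inI (int q ^ (i + 1 + 2)) n ((cc ^ N) ^ q * ((1 + ?u) ^ q - 1) - smult (int q) ((cc ^ N) ^ q * ?u))"
    by (rule Lift2[OF q _ N]) simp
  moreover have "(cc ^ N) ^ q * ?u = cc ^ (N * q) * ?u" by (simp only: power_mult)
  moreover have "i + 1 + 2 = i + 3" "Q * q ^ (i + 1) = Q * q ^ Suc i" by simp_all
  ultimately have A: "inI (int q ^ (i + 3)) n (cc ^ (N * q) * (cc ^ (Q * q ^ (i + 1)) - 1) - smult (int q) (cc ^ (N * q) * ?u))"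
    by (simp only: cc_lift_eq)
  have B: "inI (int q ^ (i + 3)) n (cc ^ (N * q) * (cc ^ N' * (cc ^ (Q * q ^ (i + 1)) - 1)))"
    by (rule inI_mult_left[OF N'])
  have "smult (int q) (cc ^ (N * q + N') * ?u) =
      cc ^ (N * q) * (cc ^ N' * (cc ^ (Q * q ^ (i + 1)) - 1))
      - cc ^ N' * (cc ^ (N * q) * (cc ^ (Q * q ^ (i + 1)) - 1) - smult (int q) (cc ^ (N * q) * ?u))"
    by (simp add: algebra_simps power_add)
  moreover have "inI (int q ^ (i + 3)) n (cc ^ (N * q) * (cc ^ N' * (cc ^ (Q * q ^ (i + 1)) - 1))
      - cc ^ N' * (cc ^ (N * q) * (cc ^ (Q * q ^ (i + 1)) - 1) - smult (int q) (cc ^ (N * q) * ?u)))"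
    by (rule inI_diff[OF B inI_mult_left[OF A]])
  ultimately have "inI (int q ^ (i + 3)) n (smult (int q) (cc ^ (N * q + N') * ?u))" by (simp only:)
  moreover have "int q ^ (i + 3) = int q * int q ^ (i + 2)"
  proof -
    have "i + 3 = Suc (i + 2)" by simp
    then show ?thesis by (simp only: power_Suc)
  qed
  ultimately have "inI (int q * int q ^ (i + 2)) n (smult (int q) (cc ^ (N * q + N') * ?u))" by (simp only:)
  then have "inI (int q ^ (i + 2)) n (cc ^ (N * q + N') * ?u)"
    by (rule inI_cancel) (use n q in auto)
  then show ?thesis unfolding Dp_def by blast
qed

lemma Dp_descent:
  assumes q: "prime q" "q \<ge> 3" and D: "Dp n (int q) Q" and n: "n \<ge> 1"
  shows "Dp n (int q ^ (i + 2)) (Q * q ^ i) \<Longrightarrow> Dp n (int q ^ 2) Q"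
proof (induction i)
  case 0 then show ?case by (simp add: numeral_2_eq_2)
next
  case (Suc i)
  then have "Dp n (int q ^ (i + 3)) (Q * q ^ (i + 1))" by (simp add: numeral_3_eq_3)
  then show ?case using Suc Dp_descent1[OF q D n] by blast
qed

lemma inI_pow_cong: "inI M d (A - B) \<Longrightarrow> inI M d (A ^ k - B ^ k)"
proof (induction k)
  case 0 then show ?case by simp
next
  case (Suc k)
  have "A ^ Suc k - B ^ Suc k = A * (A ^ k - B ^ k) + B ^ k * (A - B)" by (simp add: algebra_simps)
  then show ?case using Suc by (metis inI_add inI_mult_left)
qed

lemma inI_0_any: "inI M 0 f \<Longrightarrow> inI M d f"
  by (rule inI_d_dvd[of d 0]) auto

lemma Frob_cc:
  assumes q: "prime q"
  shows "inI (int q) 0 (cc ^ (q ^ j) - (1 + monom 1 (q ^ j)))"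
proof (induction j)
  case 0
  have "1 + monom (1::int) 1 = [:1, 1:]" by (simp add: monom_Suc one_pCons)
  then show ?case by (simp add: cc_def)
next
  case (Suc j)
  have "inI (int q) 0 ((cc ^ (q ^ j)) ^ q - (1 + monom 1 (q ^ j)) ^ q)" by (rule inI_pow_cong[OF Suc])
  moreover have "inI (int q) 0 ((1 + monom 1 (q ^ j)) ^ q - 1 - (monom 1 (q ^ j)) ^ q)" by (rule inI_Frob[OF q])
  ultimately have "inI (int q) 0 ((cc ^ (q ^ j)) ^ q - (1 + monom 1 (q ^ j)) ^ q + ((1 + monom 1 (q ^ j)) ^ q - 1 - (monom 1 (q ^ j)) ^ q))"
    by (rule inI_add)
  moreover have "(monom (1::int) (q ^ j)) ^ q = monom 1 (q ^ Suc j)" by (simp add: monom_power mult.commute)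
  moreover have "(cc ^ (q ^ j)) ^ q = cc ^ (q ^ Suc j)" by (simp add: power_mult[symmetric] mult.commute)
  ultimately show ?case by (simp add: algebra_simps)
qed

lemma Dp_upper:
  assumes q: "prime q" and n: "n = q ^ e * n'" and dv: "n' dvd q ^ f - 1" and f: "f \<ge> 1"
  shows "Dp n (int q) (q ^ e * (q ^ f - 1))"
proof -
  have qf: "q ^ f \<ge> 1" using q by (metis One_nat_def Suc_leI prime_gt_0_nat zero_less_power)
  have E: "q ^ e + q ^ e * (q ^ f - 1) = q ^ (e + f)"
    using qf by (simp add: algebra_simps power_add)
  have 1: "inI (int q) n (cc ^ (q ^ (e + f)) - (1 + monom 1 (q ^ (e + f))))" by (rule inI_0_any[OF Frob_cc[OF q]])
  have 2: "inI (int q) n (cc ^ (q ^ e) - (1 + monom 1 (q ^ e)))" by (rule inI_0_any[OF Frob_cc[OF q]])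
  have "n dvd q ^ e * (q ^ f - 1)" unfolding n using dv by simp
  then have 3: "inI (int q) n (monom 1 (q ^ e) * Xp (q ^ e * (q ^ f - 1)))"
    using inI_d_dvd inI_Xp by (metis mult.commute)
  have "monom (1::int) (q ^ e) * Xp (q ^ e * (q ^ f - 1)) = monom 1 (q ^ (e + f)) - monom 1 (q ^ e)"
    unfolding Xp_def using E by (simp add: algebra_simps mult_monom)
  then have "cc ^ (q ^ e) * (cc ^ (q ^ e * (q ^ f - 1)) - 1) =
      (cc ^ (q ^ (e + f)) - (1 + monom 1 (q ^ (e + f)))) - (cc ^ (q ^ e) - (1 + monom 1 (q ^ e)))
      + monom 1 (q ^ e) * Xp (q ^ e * (q ^ f - 1))"
    using E by (simp add: algebra_simps power_add[symmetric])
  moreover have "inI (int q) n \<dots>" by (intro inI_add inI_diff 1 2 3)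
  ultimately show ?thesis unfolding Dp_def by metis
qed

lemma pcompose_power: "(f ^ k) \<circ>\<^sub>p g = (f \<circ>\<^sub>p g) ^ k"
  by (induction k) (simp_all add: pcompose_mult pcompose_1)

lemma coeff_pcompose_monom:
  fixes f :: "int poly"
  assumes "p \<ge> 1"
  shows "coeff (f \<circ>\<^sub>p monom 1 p) i = (if p dvd i then coeff f (i div p) else 0)"
  using assms
proof (induction f arbitrary: i)
  case 0 then show ?case by simp
next
  case (pCons a f)
  have "coeff (pCons a f \<circ>\<^sub>p monom 1 p) i = coeff [:a:] i + coeff (monom 1 p * (f \<circ>\<^sub>p monom 1 p)) i"
    by (simp add: pcompose_pCons)
  also have "\<dots> = (if i = 0 then a else 0) + (if i < p then 0 else coeff (f \<circ>\<^sub>p monom 1 p) (i - p))"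
    by (simp add: coeff_monom_mult coeff_pCons split: nat.split)
  also have "\<dots> = (if p dvd i then coeff (pCons a f) (i div p) else 0)"
  proof (cases "i < p")
    case True
    then show ?thesis using pCons.prems by (cases "i = 0") (auto dest: dvd_imp_le)
  next
    case False
    then have ip: "i = (i - p) + p" by simp
    have d: "p dvd i \<longleftrightarrow> p dvd (i - p)" using False by (metis dvd_add_triv_right_iff ip)
    have "i div p = Suc ((i - p) div p)" using False pCons.prems
      by (metis add_diff_inverse_nat div_add_self2 not_one_le_zero plus_1_eq_Suc add.commute le_antisym less_imp_le_nat zero_less_one)
    then show ?thesis using False pCons.IH[OF pCons.prems, of "i - p"] d pCons.prems by auto
  qed
  finally show ?case .
qed

definition sec :: "nat \<Rightarrow> int poly \<Rightarrow> int poly" where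
  "sec p g = Abs_poly (\<lambda>i. coeff g (p * i))"

lemma coeff_sec: assumes "p \<ge> 1" shows "coeff (sec p g) i = coeff g (p * i)"
proof -
  have "coeff (Abs_poly (\<lambda>i. coeff g (p * i))) = (\<lambda>i. coeff g (p * i))"
  proof (rule coeff_Abs_poly[of "degree g"])
    fix i assume "degree g < i"
    moreover have "i \<le> p * i" using assms by simp
    ultimately show "coeff g (p * i) = 0" by (intro coeff_eq_0) linarith
  qed
  then show ?thesis unfolding sec_def by simp
qed

lemma sec_pcompose: "p \<ge> 1 \<Longrightarrow> sec p (f \<circ>\<^sub>p monom 1 p) = f"
  by (rule poly_eqI) (simp add: coeff_sec coeff_pcompose_monom)

lemma sec_add: "p \<ge> 1 \<Longrightarrow> sec p (f + g) = sec p f + sec p g"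
  by (rule poly_eqI) (simp add: coeff_sec)

lemma sec_smult: "p \<ge> 1 \<Longrightarrow> sec p (smult M f) = smult M (sec p f)"
  by (rule poly_eqI) (simp add: coeff_sec)

lemma sec_Xp: "p \<ge> 1 \<Longrightarrow> sec p (Xp (p * d) * b) = Xp d * sec p b"
proof (rule poly_eqI)
  fix i assume p: "p \<ge> 1"
  have "coeff (sec p (Xp (p * d) * b)) i = coeff (monom 1 (p * d) * b) (p * i) - coeff b (p * i)"
    using p by (simp add: coeff_sec Xp_def algebra_simps)
  also have "\<dots> = (if i < d then 0 else coeff b (p * (i - d))) - coeff b (p * i)"
    using p by (simp add: coeff_monom_mult diff_mult_distrib2)
  also have "\<dots> = coeff (Xp d * sec p b) i"
    using p by (simp add: coeff_sec Xp_def left_diff_distrib coeff_monom_mult)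
  finally show "coeff (sec p (Xp (p * d) * b)) i = coeff (Xp d * sec p b) i" .
qed

lemma inI_sec:
  assumes "p \<ge> 1" "inI M (p * d) (f \<circ>\<^sub>p monom 1 p)"
  shows "inI M d f"
proof -
  obtain a b where "f \<circ>\<^sub>p monom 1 p = smult M a + Xp (p * d) * b" using assms(2) unfolding inI_def by blast
  then have "sec p (f \<circ>\<^sub>p monom 1 p) = smult M (sec p a) + Xp d * sec p b"
    using assms(1) by (simp add: sec_add sec_smult sec_Xp)
  then have "f = smult M (sec p a) + Xp d * sec p b" using sec_pcompose[OF assms(1)] by simp
  then show ?thesis unfolding inI_def by blast
qed

lemma nonwief:
  assumes p: "prime p" "p \<ge> 3" and nw: "\<not> wieferich p" and c: "[2 ^ Q = 1] (mod p ^ 2)"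
  shows "p dvd Q"
proof (rule ccontr)
  assume np: "\<not> p dvd Q"
  have odd: "\<not> p dvd 2"
  proof
    assume "p dvd 2" then have "p \<le> 2" using dvd_imp_le by fastforce
    with p show False by simp
  qed
  have cop: "coprime (p ^ 2) 2" using prime_imp_power_coprime_nat[OF p(1) odd, of 2] coprime_commute by blast
  have o1: "ord (p ^ 2) 2 dvd Q" using c ord_divides by blast
  have o2: "ord (p ^ 2) 2 dvd p * (p - 1)"
    using order_divides_totient[OF cop] totient_prime_power[OF p(1), of 2] by simp
  have "\<not> p dvd ord (p ^ 2) 2" using o1 np dvd_trans by blast
  then have "coprime (ord (p ^ 2) 2) p" using prime_imp_coprime_nat[OF p(1), of "ord (p^2) 2"] coprime_commute by blast
  then have "ord (p ^ 2) 2 dvd p - 1" using o2 coprime_dvd_mult_right_iff by blast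
  then have "[2 ^ (p - 1) = 1] (mod p ^ 2)" using ord_divides by blast
  then show False using nw p unfolding wieferich_def by simp
qed

lemma poly_cc1: "poly cc 1 = 2"
  by (simp add: cc_def)

lemma L_base:
  assumes p: "prime p" "p \<ge> 3" and nw: "\<not> wieferich p" and I: "inI (int p ^ 2) 1 (cc ^ Q - 1)"
  shows "p dvd Q"
proof -
  have "int p ^ 2 dvd poly (cc ^ Q - 1) 1" by (rule inI_eval1[OF I])
  then have "int (p ^ 2) dvd 2 ^ Q - 1" by (simp add: poly_cc1)
  then have "[int (2 ^ Q) = int 1] (mod int (p ^ 2))" by (simp add: cong_iff_dvd_diff)
  then have "[2 ^ Q = 1] (mod p ^ 2)" by (simp only: cong_int_iff)
  then show ?thesis by (rule nonwief[OF p nw])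
qed

lemma smult_sum_right: "smult a (sum f S) = (\<Sum>i\<in>S. smult a (f i))"
  by (induction S rule: infinite_finite_induct) (auto simp: smult_add_right)

definition ww :: "nat \<Rightarrow> int poly" where
  "ww p = (\<Sum>k\<in>{1..<p}. monom (int (p choose k) div int p) k)"

lemma cc_p_decomp:
  assumes p: "prime p"
  shows "cc ^ p = [:2:] + smult (int p) (ww p) + Xp p"
proof -
  have p1: "p \<ge> 1" using prime_ge_1_nat[OF p] .
  have x: "[:0, 1:] ^ k = (monom 1 k :: int poly)" for k by (simp add: monom_altdef)
  have "cc ^ p = ([:0, 1:] + 1) ^ p" by (simp add: cc_def one_pCons)
  also have "\<dots> = (\<Sum>k\<le>p. of_nat (p choose k) * [:0, 1:] ^ k * 1 ^ (p - k))" by (rule binomial_ring)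
  also have "\<dots> = (\<Sum>k\<le>p. of_nat (p choose k) * monom 1 k)" by (simp add: x)
  also have "{..p} = insert 0 (insert p {1..<p})" using p1 by auto
  also have "(\<Sum>k\<in>insert 0 (insert p {1..<p}). of_nat (p choose k) * (monom 1 k :: int poly))
      = 1 + monom 1 p + (\<Sum>k\<in>{1..<p}. of_nat (p choose k) * monom 1 k)"
    using p1 by (simp add: sum.insert monom_0 one_pCons)
  also have "(\<Sum>k\<in>{1..<p}. of_nat (p choose k) * (monom 1 k :: int poly)) = smult (int p) (ww p)"
    unfolding ww_def smult_sum_right
  proof (rule sum.cong)
    fix k assume k: "k \<in> {1..<p}"
    have "int p dvd int (p choose k)" using dvd_choose_prime[of k p] k p by auto
    then have "int p * (int (p choose k) div int p) = int (p choose k)" by simp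
    then show "of_nat (p choose k) * monom 1 k = smult (int p) (monom (int (p choose k) div int p) k)"
      by (simp add: of_nat_poly_mult smult_monom)
  qed simp
  finally show ?thesis unfolding Xp_def by (simp add: one_pCons algebra_simps numeral_poly)
qed

lemma degree_ww: "degree (ww p) < p \<or> p = 0"
proof (cases "p = 0")
  case False
  have "degree (ww p) \<le> p - 1" unfolding ww_def
    by (rule degree_sum_le) (auto intro: order.trans[OF degree_monom_le])
  then show ?thesis using False by simp
qed simp

lemma coeff_ww1: assumes "p \<ge> 2" shows "coeff (ww p) 1 = 1"
proof -
  have "coeff (ww p) 1 = (\<Sum>k\<in>{1..<p}. if k = 1 then int (p choose k) div int p else 0)"
    unfolding ww_def coeff_sum by (simp add: coeff_monom)
  also have "\<dots> = int (p choose 1) div int p" using assms by simp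
  also have "\<dots> = 1" using assms by simp
  finally show ?thesis .
qed

lemma ring_id1: "(a::'a::comm_ring_1) - 1 - (a - b) - (b - c - x) = c - 1 + x"
  by (simp add: algebra_simps)

lemma const_mult_l: "[:a:] * q = smult a q"
  by simp

lemma const_mult_r: "q * [:a:] = smult a q"
  by (subst mult.commute) simp

lemma L_step0:
  assumes p: "prime p" "p \<ge> 3" and I: "inI (int p ^ 2) p (cc ^ Q - 1)" and d: "p dvd Q"
  shows "p ^ 2 dvd Q"
proof -
  obtain s where Q: "Q = p * s" using d by blast
  define t where "t = smult (int p) (ww p)"
  have 1: "inI (int p ^ 2) p (cc ^ p - ([:2:] + t))"
    using cc_p_decomp[OF p(1)] inI_Xp[of "int p ^ 2" p 1] unfolding t_def by simp
  have 2: "inI (int p ^ 2) p ((cc ^ p) ^ s - ([:2:] + t) ^ s)" by (rule inI_pow_cong[OF 1])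
  have tI: "inI (int p ^ 1) p t" unfolding t_def by (simp add: inI_smultM)
  have 3: "inI (int p ^ 2) p ((t + [:2:]) ^ s - [:2:] ^ s - of_nat s * t * [:2:] ^ (s - 1))"
    using inI_H2[OF tI, of "[:2:]" s] by (simp only: mult_1_right)
  have ccQ: "cc ^ Q = (cc ^ p) ^ s" unfolding Q by (simp only: power_mult)
  have tb: "t + [:2:] = [:2:] + t" by (simp only: add.commute)
  have "inI (int p ^ 2) p (cc ^ Q - 1 - ((cc ^ p) ^ s - ([:2:] + t) ^ s) - ((t + [:2:]) ^ s - [:2:] ^ s - of_nat s * t * [:2:] ^ (s - 1)))"
    by (rule inI_diff[OF inI_diff[OF I 2] 3])
  then have "inI (int p ^ 2) p ([:2:] ^ s - 1 + of_nat s * t * [:2:] ^ (s - 1))"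
    by (simp only: ccQ tb ring_id1)
  moreover have "[:2:] ^ s - 1 + of_nat s * t * [:2:] ^ (s - 1) = [:2 ^ s - 1:] + smult (int s * int p * 2 ^ (s - 1)) (ww p)"
  proof -
    have "[:2:] ^ s - 1 = [:(2::int) ^ s - 1:]" by (simp add: poly_const_pow one_pCons)
    moreover have "of_nat s * t * [:2:] ^ (s - 1) = smult (int s * int p * 2 ^ (s - 1)) (ww p)"
      unfolding t_def by (simp add: poly_const_pow of_nat_poly const_mult_l const_mult_r ac_simps)
    ultimately show ?thesis by (simp only:)
  qed
  ultimately have F: "inI (int p ^ 2) p ([:2 ^ s - 1:] + smult (int s * int p * 2 ^ (s - 1)) (ww p))" by (simp only:)
  have p2: "p \<ge> 2" using p by simp
  have dw: "degree (ww p) < p" using degree_ww[of p] p2 by auto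
  have dg: "degree ([:2 ^ s - 1:] + smult (int s * int p * 2 ^ (s - 1)) (ww p)) < p"
  proof (rule degree_add_less)
    show "degree [:(2::int) ^ s - 1:] < p" using p2 by simp
    show "degree (smult (int s * int p * 2 ^ (s - 1)) (ww p)) < p"
      using degree_smult_le[of "int s * int p * 2 ^ (s - 1)" "ww p"] dw by linarith
  qed
  have r: "int p ^ 2 dvd coeff ([:2 ^ s - 1:] + smult (int s * int p * 2 ^ (s - 1)) (ww p)) 1"
    by (rule read_off[OF F _ dg]) (use p2 in simp)
  have c1: "coeff ([:2 ^ s - 1:] + smult (int s * int p * 2 ^ (s - 1)) (ww p)) 1 = int s * int p * 2 ^ (s - 1)"
    using coeff_ww1[OF p2] by simp
  from r have "int p ^ 2 dvd int s * int p * 2 ^ (s - 1)" unfolding c1 .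
  then obtain k where k: "int s * int p * 2 ^ (s - 1) = int p ^ 2 * k" by (elim dvdE)
  then have "int p * (int s * 2 ^ (s - 1)) = int p * (int p * k)" by (simp add: power2_eq_square ac_simps)
  then have "int s * 2 ^ (s - 1) = int p * k" using p2 by simp
  then have "int p dvd int (s * 2 ^ (s - 1))" by simp
  then have "p dvd s * 2 ^ (s - 1)" by (simp only: int_dvd_int_iff)
  then have "p dvd s \<or> p dvd 2 ^ (s - 1)" using p(1) prime_dvd_mult_iff by blast
  moreover have "\<not> p dvd 2 ^ (s - 1)"
  proof
    assume "p dvd 2 ^ (s - 1)"
    then have "p dvd 2" using p(1) prime_dvd_power by blast
    then have "p \<le> 2" using dvd_imp_le by fastforce
    with p show False by simp
  qed
  ultimately have "p dvd s" by blast
  then show ?thesis unfolding Q by (simp add: power2_eq_square)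
qed

lemma cc_pcompose: "cc \<circ>\<^sub>p monom 1 p = 1 + monom 1 p"
  by (simp add: cc_def pcompose_pCons)

lemma L_stepE:
  assumes p: "prime p" "p \<ge> 3" and e: "e \<ge> 1"
    and I: "inI (int p ^ 2) (p ^ (e + 1)) (cc ^ Q - 1)" and d: "p ^ (e + 1) dvd Q"
    and IH: "\<And>Q'. inI (int p ^ 2) (p ^ e) (cc ^ Q' - 1) \<Longrightarrow> p ^ (e + 1) dvd Q'"
  shows "p ^ (e + 2) dvd Q"
proof -
  obtain s where Q0: "Q = p ^ (e + 1) * s" using d by (elim dvdE)
  define K where "K = p ^ (e - 1) * s"
  obtain e' where e': "e = Suc e'" using e by (cases e) auto
  have Q: "Q = p * p * K" unfolding Q0 K_def e' by (simp add: algebra_simps)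
  define B where "B = 1 + monom (1::int) p"
  have F1: "inI (int p ^ 1) 0 (cc ^ p - B)" using Frob_cc[OF p(1), of 1] unfolding B_def by simp
  have "inI (int p ^ (1 + 1)) 0 ((cc ^ p - B + B) ^ p - B ^ p)" by (rule inI_G[OF p _ F1]) simp
  then have "inI (int p ^ 2) 0 ((cc ^ p) ^ p - B ^ p)" by (simp add: power2_eq_square)
  then have "inI (int p ^ 2) 0 (((cc ^ p) ^ p) ^ K - (B ^ p) ^ K)" by (rule inI_pow_cong)
  then have 2: "inI (int p ^ 2) (p ^ (e + 1)) (cc ^ Q - B ^ (p * K))"
    unfolding Q by (simp only: power_mult inI_0_any)
  have "inI (int p ^ 2) (p ^ (e + 1)) ((cc ^ Q - 1) - (cc ^ Q - B ^ (p * K)))" by (rule inI_diff[OF I 2])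
  moreover have "(cc ^ Q - 1) - (cc ^ Q - B ^ (p * K)) = (cc ^ (p * K) - 1) \<circ>\<^sub>p monom 1 p"
    by (simp add: pcompose_diff pcompose_power cc_pcompose pcompose_1 B_def)
  ultimately have "inI (int p ^ 2) (p * p ^ e) ((cc ^ (p * K) - 1) \<circ>\<^sub>p monom 1 p)" by simp
  moreover have p1: "p \<ge> 1" using p by simp
  ultimately have "inI (int p ^ 2) (p ^ e) (cc ^ (p * K) - 1)" using inI_sec by blast
  then have "p ^ (e + 1) dvd p * K" by (rule IH)
  moreover have "p * K = p ^ e * s" unfolding K_def e' by (simp add: ac_simps)
  ultimately have "p ^ e * p dvd p ^ e * s" by (metis power_add power_one_right)
  moreover have "p ^ e > 0" using p1 by simp
  ultimately have "p dvd s" using nat_mult_dvd_cancel1 by blast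
  then show ?thesis unfolding Q0 by (auto simp: ac_simps)
qed

lemma L_all:
  assumes p: "prime p" "p \<ge> 3" and nw: "\<not> wieferich p"
  shows "inI (int p ^ 2) (p ^ e) (cc ^ Q - 1) \<Longrightarrow> p ^ (e + 1) dvd Q"
proof (induction e arbitrary: Q)
  case 0 then show ?case using L_base[OF p nw] by simp
next
  case (Suc e)
  have "inI (int p ^ 2) (p ^ e) (cc ^ Q - 1)"
    by (rule inI_d_dvd[OF _ Suc.prems]) (simp add: le_imp_power_dvd)
  then have d: "p ^ (e + 1) dvd Q" by (rule Suc.IH)
  show ?case
  proof (cases "e = 0")
    case True
    then show ?thesis using L_step0[OF p] Suc.prems d by (simp add: power2_eq_square)
  next
    case False
    then show ?thesis using L_stepE[OF p, of e Q] Suc.prems d Suc.IH by simp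
  qed
qed

lemma cc_inv:
  assumes p: "prime p" "p \<ge> 3"
  shows "\<exists>G. inI (int p ^ 2) (p ^ e) (cc * G - 1)"
proof -
  have h1: "inI (int p) (p ^ e) (cc ^ (p ^ e) - (1 + monom 1 (p ^ e)))"
    by (rule inI_0_any[OF Frob_cc[OF p(1)]])
  have h2: "inI (int p) (p ^ e) ((1 + monom 1 (p ^ e)) - [:2:])"
  proof -
    have "(1 + monom 1 (p ^ e)) - [:2:] = Xp (p ^ e) * 1" unfolding Xp_def by (simp add: numeral_poly)
    then show ?thesis using inI_Xp by metis
  qed
  define h0 where "h0 = cc ^ (p ^ e) - [:2:]"
  have "h0 = (cc ^ (p ^ e) - (1 + monom 1 (p ^ e))) + ((1 + monom 1 (p ^ e)) - [:2:])"
    unfolding h0_def by (simp only: add_diff_eq diff_add_cancel)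
  then have h0I: "inI (int p) (p ^ e) h0" using inI_add[OF h1 h2] by (simp only:)
  have oddp: "odd p" using prime_odd_nat[OF p(1)] p(2) by simp
  define t :: int where "t = (int p ^ 2 + 1) div 2"
  have t2: "2 * t = int p ^ 2 + 1" unfolding t_def using oddp by (auto simp: elim!: oddE) (simp add: algebra_simps power2_eq_square)
  define h where "h = smult t h0 + [:int p ^ 2:]"
  have hI: "inI (int p) (p ^ e) h" unfolding h_def
  proof (rule inI_add)
    show "inI (int p) (p ^ e) (smult t h0)" by (rule inI_smult[OF h0I])
    have "[:int p ^ 2:] = smult (int p) [:int p:]" by (simp add: power2_eq_square)
    then show "inI (int p) (p ^ e) [:int p ^ 2:]" using inI_smultM by metis
  qed
  have th: "smult t (cc ^ (p ^ e)) = 1 + h"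
  proof -
    have "cc ^ (p ^ e) = [:2:] + h0" unfolding h0_def by simp
    then have "smult t (cc ^ (p ^ e)) = [:2 * t:] + smult t h0" by (simp add: smult_add_right mult.commute)
    also have "\<dots> = 1 + h" unfolding h_def t2 by (simp add: one_pCons)
    finally show ?thesis .
  qed
  define G where "G = smult t (cc ^ (p ^ e - 1)) * (1 - h)"
  have "cc * G = smult t (cc ^ (p ^ e)) * (1 - h)"
  proof -
    have "p ^ e \<ge> 1" using p by simp
    then have "cc * cc ^ (p ^ e - 1) = cc ^ (p ^ e)" by (metis power_eq_if Suc_diff_1 le_less_trans less_one not_le power_Suc)
    then show ?thesis unfolding G_def by (metis mult.assoc mult_smult_right)
  qed
  then have "cc * G - 1 = - (h * h)" using th by (simp add: algebra_simps)
  moreover have "inI (int p * int p) (p ^ e) (h * h)" by (rule inI_mult[OF hI hI])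
  ultimately have "inI (int p ^ 2) (p ^ e) (cc * G - 1)" by (simp add: power2_eq_square inI_uminus)
  then show ?thesis by blast
qed

lemma Dp_lower:
  assumes p: "prime p" "p \<ge> 3" and nw: "\<not> wieferich p" and dn: "p ^ e dvd n"
    and D: "Dp n (int p ^ 2) Q"
  shows "p ^ (e + 1) dvd Q"
proof -
  obtain N where N: "inI (int p ^ 2) n (cc ^ N * (cc ^ Q - 1))" using D unfolding Dp_def by blast
  then have N': "inI (int p ^ 2) (p ^ e) (cc ^ N * (cc ^ Q - 1))" by (rule inI_d_dvd[OF dn])
  obtain G where G: "inI (int p ^ 2) (p ^ e) (cc * G - 1)" using cc_inv[OF p] by blast
  have "inI (int p ^ 2) (p ^ e) ((cc * G) ^ N - 1 ^ N)" by (rule inI_pow_cong) (simp add: G)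
  then have A: "inI (int p ^ 2) (p ^ e) (((cc * G) ^ N - 1) * (cc ^ Q - 1))" by (simp add: inI_mult_right)
  have B: "inI (int p ^ 2) (p ^ e) (G ^ N * (cc ^ N * (cc ^ Q - 1)))" by (rule inI_mult_left[OF N'])
  have "cc ^ Q - 1 = G ^ N * (cc ^ N * (cc ^ Q - 1)) - ((cc * G) ^ N - 1) * (cc ^ Q - 1)"
    by (simp add: algebra_simps power_mult_distrib)
  then have "inI (int p ^ 2) (p ^ e) (cc ^ Q - 1)" using inI_diff[OF B A] by simp
  then show ?thesis by (rule L_all[OF p nw])
qed

lemma PP:
  assumes p: "prime p" "p \<ge> 3" and nw: "\<not> wieferich p" and n: "n \<ge> 1" and k: "k \<ge> 1"
  shows "\<exists>P>0. Dp n (int p ^ k) P" "per n (int p ^ k) = p ^ (k - 1) * per n (int p)"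
proof -
  define e where "e = multiplicity p n"
  have nu: "\<not> is_unit p" using p(1) by auto
  obtain n' where n': "n = p ^ e * n'" "\<not> p dvd n'"
    using multiplicity_decompose'[of n p] n nu unfolding e_def by auto
  have n'0: "n' > 0" using n' n by (cases "n' = 0") auto
  have cop: "coprime p n'" using prime_imp_coprime_nat[OF p(1) n'(2)] .
  define f where "f = totient n'"
  have "totient n' > 0" using n'0 by simp
  then have f1: "f \<ge> 1" unfolding f_def by (simp add: Suc_le_eq)
  have "[p ^ f = 1] (mod n')" unfolding f_def using euler_theorem[of p n'] cop by simp
  then have dv: "n' dvd p ^ f - 1" by (rule cong_to_1_nat)
  define Q0 where "Q0 = p ^ e * (p ^ f - 1)"
  have pf: "p ^ f \<ge> p" using f1 p by (metis One_nat_def le_less power_increasing power_one_right prime_gt_0_nat Suc_leI)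
  have Q0pos: "Q0 > 0" unfolding Q0_def using pf p by (simp add: prime_gt_0_nat)
  have D0: "Dp n (int p) Q0" unfolding Q0_def by (rule Dp_upper[OF p(1) n'(1) dv f1])
  have ex1: "\<exists>P>0. Dp n (int p) P" using D0 Q0pos by blast
  have exk: "\<exists>P>0. Dp n (int p ^ k) P"
    using Dp_lift[OF p(1,2) D0 k] Q0pos p by (intro exI[of _ "Q0 * p ^ (k - 1)"]) (simp add: prime_gt_0_nat)
  then show "\<exists>P>0. Dp n (int p ^ k) P" .
  note P1 = per_props[OF ex1] and Pk = per_props[OF exk]
  define a where "a = per n (int p)"
  define b where "b = per n (int p ^ k)"
  have "Dp n (int p) b" unfolding b_def
    by (rule Dp_dvd_mod[OF _ Pk(2)]) (use k in \<open>simp add: dvd_power\<close>)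
  then have ab: "a dvd b" unfolding a_def using P1(3) by blast
  have "Dp n (int p ^ k) (a * p ^ (k - 1))" unfolding a_def by (rule Dp_lift[OF p(1,2) P1(2) k])
  then have ba: "b dvd a * p ^ (k - 1)" unfolding b_def using Pk(3) by blast
  obtain t where t: "b = a * t" using ab by (elim dvdE)
  have apos: "a > 0" unfolding a_def using P1(1) .
  have "t dvd p ^ (k - 1)" using ba apos unfolding t by (simp add: nat_mult_dvd_cancel1)
  then obtain j where j: "j \<le> k - 1" "t = p ^ j" using divides_primepow_nat[OF p(1)] by blast
  have "j = k - 1"
  proof (rule ccontr)
    assume "j \<noteq> k - 1"
    with j have jk: "j \<le> k - 2" "k \<ge> 2" by auto
    define i where "i = k - 2"
    have ki: "k = i + 2" unfolding i_def using jk by simp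
    have "b dvd a * p ^ i" unfolding t j(2) using jk unfolding i_def by (simp add: le_imp_power_dvd)
    then have "Dp n (int p ^ (i + 2)) (a * p ^ i)" using Pk(3) unfolding b_def ki by blast
    then have "Dp n (int p ^ 2) a" by (rule Dp_descent[OF p(1,2) P1(2)[folded a_def] n])
    moreover have dn: "p ^ e dvd n" using n'(1) by simp
    ultimately have "p ^ (e + 1) dvd a" using Dp_lower[OF p nw] by blast
    moreover have "a dvd Q0" unfolding a_def using P1(3) D0 by blast
    ultimately have "p ^ e * p dvd p ^ e * (p ^ f - 1)" unfolding Q0_def by (metis dvd_trans power_add power_one_right)
    then have "p dvd p ^ f - 1" using p by (simp add: nat_mult_dvd_cancel1 prime_gt_0_nat)
    moreover have "p dvd p ^ f" using f1 by (simp add: dvd_power)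
    ultimately have "p dvd p ^ f - (p ^ f - 1)" by (rule dvd_diff_nat[rotated])
    moreover have "p ^ f - (p ^ f - 1) = 1" using pf p by simp
    ultimately show False using p by simp
  qed
  then show "per n (int p ^ k) = p ^ (k - 1) * per n (int p)"
    using t j unfolding a_def b_def by simp
qed

definition Avec :: "nat \<Rightarrow> (nat \<Rightarrow> nat) \<Rightarrow> int poly" where
  "Avec n a = Poly (map (\<lambda>j. int (a ((n - j) mod n))) [0..<n])"

lemma coeff_Avec: "coeff (Avec n a) j = (if j < n then int (a ((n - j) mod n)) else 0)"
  unfolding Avec_def coeff_Poly_eq by (simp add: nth_default_def)

lemma degree_lt: "n \<ge> 1 \<Longrightarrow> (\<And>j. j \<ge> n \<Longrightarrow> coeff f j = 0) \<Longrightarrow> degree f < n"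
proof -
  assume n: "n \<ge> 1" and c: "\<And>j. j \<ge> n \<Longrightarrow> coeff f j = 0"
  have "degree f \<le> n - 1" by (rule degree_le) (use n c in auto)
  then show ?thesis using n by linarith
qed

lemma Tmap_vecs: "m \<ge> 1 \<Longrightarrow> a \<in> vecs m n \<Longrightarrow> Tmap m n a \<in> vecs m n"
  unfolding vecs_def Tmap_def by auto

lemma Tmap_iter_vecs: "m \<ge> 1 \<Longrightarrow> a \<in> vecs m n \<Longrightarrow> (Tmap m n ^^ k) a \<in> vecs m n"
  by (induction k) (auto intro: Tmap_vecs)

lemma mod_diff_dvd: "int m dvd int x - int (x mod m)"
proof -
  have "int x - int (x mod m) = int m * int (x div m)"
    by (metis add_diff_cancel_right' div_mult_mod_eq of_nat_add of_nat_mult mult.commute)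
  then show ?thesis by simp
qed

lemma Avec_T:
  assumes m: "m \<ge> 1" and n: "n \<ge> 1" and a: "a \<in> vecs m n"
  shows "inI (int m) n (cc * Avec n a - Avec n (Tmap m n a))"
proof -
  define c where "c = int (a (1 mod n))"
  define D where "D = cc * Avec n a - Avec n (Tmap m n a) - Xp n * [:c:]"
  have ccA: "cc * f = f + pCons 0 f" for f :: "int poly" by (simp add: cc_def)
  have cX: "coeff (Xp n * [:c:]) j = (if j = n then c else 0) - (if j = 0 then c else 0)" for j
    unfolding Xp_def by (simp add: left_diff_distrib coeff_monom)
  have "int m dvd coeff D j" for j
  proof -
    have cD: "coeff D j = coeff (Avec n a) j + (if j = 0 then 0 else coeff (Avec n a) (j - 1))
        - coeff (Avec n (Tmap m n a)) j - ((if j = n then c else 0) - (if j = 0 then c else 0))"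
      unfolding D_def ccA using cX[of j] by (simp add: coeff_pCons split: nat.split)
    consider "j = 0" | "0 < j \<and> j < n" | "j = n" | "j > n" by linarith
    then show ?thesis
    proof cases
      case 1
      then have "coeff D j = int (a 0 + a (1 mod n)) - int ((a 0 + a (1 mod n)) mod m)"
        using cD n unfolding c_def by (simp add: coeff_Avec Tmap_def)
      then show ?thesis using mod_diff_dvd[of m "a 0 + a (1 mod n)"] by (simp only:)
    next
      case 2
      then have r: "(n - j) mod n = n - j" by simp
      have r0: "n - (j - 1) = n - j + 1" using 2 by arith
      have j1: "j - 1 < n" using 2 by arith
      have "coeff D j = int (a (n - j) + a ((n - j + 1) mod n)) - int ((a (n - j) + a ((n - j + 1) mod n)) mod m)"
        using cD 2 r r0 j1 by (simp add: coeff_Avec Tmap_def)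
      then show ?thesis using mod_diff_dvd[of m "a (n - j) + a ((n - j + 1) mod n)"] by (simp only:)
    next
      case 3
      then have "coeff D j = 0" using cD n unfolding c_def by (simp add: coeff_Avec)
      then show ?thesis by simp
    next
      case 4
      then have "coeff D j = 0" using cD n by (simp add: coeff_Avec)
      then show ?thesis by simp
    qed
  qed
  then obtain D' where "D = smult (int m) D'" using all_dvd_smult by blast
  then have "cc * Avec n a - Avec n (Tmap m n a) = smult (int m) D' + Xp n * [:c:]"
    unfolding D_def by (simp add: algebra_simps)
  then show ?thesis unfolding inI_def by blast
qed

lemma Avec_inj:
  assumes m: "m \<ge> 1" and n: "n \<ge> 1" and a: "a \<in> vecs m n" and b: "b \<in> vecs m n"
    and I: "inI (int m) n (Avec n a - Avec n b)"
  shows "a = b"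
proof
  fix i
  show "a i = b i"
  proof (cases "i < n")
    case False then show ?thesis using a b unfolding vecs_def by simp
  next
    case True
    have dg: "degree (Avec n a - Avec n b) < n" by (rule degree_lt[OF n]) (simp add: coeff_Avec)
    define j where "j = (n - i) mod n"
    have j: "j < n" unfolding j_def using n by simp
    have ji: "(n - j) mod n = i"
    proof (cases "i = 0")
      case True then show ?thesis unfolding j_def by simp
    next
      case False
      then have "n - i < n" using True by simp
      then have "j = n - i" unfolding j_def by simp
      then show ?thesis using True False by simp
    qed
    have "int m dvd coeff (Avec n a - Avec n b) j" by (rule read_off[OF I n dg])
    then have "int m dvd int (a i) - int (b i)" using j ji by (simp add: coeff_Avec)
    then have "[int (a i) = int (b i)] (mod int m)" by (simp add: cong_iff_dvd_diff)
    then have "[a i = b i] (mod m)" by (simp only: cong_int_iff)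
    moreover have "a i < m" "b i < m" using a b True unfolding vecs_def by auto
    ultimately show ?thesis unfolding cong_def by simp
  qed
qed

lemma Avec_iter:
  assumes m: "m \<ge> 1" and n: "n \<ge> 1" and a: "a \<in> vecs m n"
  shows "inI (int m) n (cc ^ k * Avec n a - Avec n ((Tmap m n ^^ k) a))"
proof (induction k)
  case 0 then show ?case by simp
next
  case (Suc k)
  have v: "(Tmap m n ^^ k) a \<in> vecs m n" by (rule Tmap_iter_vecs[OF m a])
  have eq: "cc ^ Suc k * Avec n a - Avec n ((Tmap m n ^^ Suc k) a) =
      cc * (cc ^ k * Avec n a - Avec n ((Tmap m n ^^ k) a)) + (cc * Avec n ((Tmap m n ^^ k) a) - Avec n (Tmap m n ((Tmap m n ^^ k) a)))"
    by (simp add: algebra_simps)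
  show ?case unfolding eq by (rule inI_add[OF inI_mult_left[OF Suc] Avec_T[OF m n v]])
qed

definition e0 :: "nat \<Rightarrow> nat" where "e0 = (\<lambda>i. if i = 0 then 1 else 0)"

lemma e0_vecs: "m \<ge> 2 \<Longrightarrow> n \<ge> 1 \<Longrightarrow> e0 \<in> vecs m n"
  unfolding vecs_def e0_def by auto

lemma Avec_e0: assumes n: "n \<ge> 1" shows "Avec n e0 = 1"
proof (rule poly_eqI)
  fix j
  show "coeff (Avec n e0) j = coeff 1 j"
  proof (cases "j = 0")
    case True then show ?thesis using n by (simp add: coeff_Avec e0_def)
  next
    case False
    show ?thesis
    proof (cases "j < n")
      case True
      then have "(n - j) mod n = n - j" using False by simp
      then show ?thesis using True False by (simp add: coeff_Avec e0_def)
    next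
      case False2: False
      then show ?thesis using False by (simp add: coeff_Avec)
    qed
  qed
qed

lemma period_iff:
  assumes m: "m \<ge> 1" and n: "n \<ge> 1" and a: "a \<in> vecs m n"
  shows "(Tmap m n ^^ (k + P)) a = (Tmap m n ^^ k) a \<longleftrightarrow> inI (int m) n (cc ^ k * (cc ^ P - 1) * Avec n a)"
proof -
  define X where "X j = Avec n ((Tmap m n ^^ j) a)" for j
  have I: "inI (int m) n (cc ^ j * Avec n a - X j)" for j unfolding X_def by (rule Avec_iter[OF m n a])
  have e1: "cc ^ k * (cc ^ P - 1) * Avec n a = (cc ^ (k + P) * Avec n a - X (k + P)) - (cc ^ k * Avec n a - X k) + (X (k + P) - X k)"
    by (simp add: algebra_simps power_add)
  have e2: "X (k + P) - X k = cc ^ k * (cc ^ P - 1) * Avec n a - (cc ^ (k + P) * Avec n a - X (k + P)) + (cc ^ k * Avec n a - X k)"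
    by (simp add: algebra_simps power_add)
  show ?thesis
  proof
    assume "(Tmap m n ^^ (k + P)) a = (Tmap m n ^^ k) a"
    then have z: "X (k + P) - X k = 0" unfolding X_def by simp
    show "inI (int m) n (cc ^ k * (cc ^ P - 1) * Avec n a)"
      unfolding e1 z by (simp only: add_0_right) (rule inI_diff[OF I I])
  next
    assume H: "inI (int m) n (cc ^ k * (cc ^ P - 1) * Avec n a)"
    have "inI (int m) n (X (k + P) - X k)" unfolding e2 by (intro inI_add inI_diff H I)
    then show "(Tmap m n ^^ (k + P)) a = (Tmap m n ^^ k) a"
      unfolding X_def by (rule Avec_inj[OF m n Tmap_iter_vecs[OF m a] Tmap_iter_vecs[OF m a]])
  qed
qed

lemma cycle_e0:
  assumes m: "m \<ge> 2" and n: "n \<ge> 1"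
  shows "cycle_len m n e0 = per n (int m)"
proof -
  have m1: "m \<ge> 1" using m by simp
  have key: "(0 < P \<and> (\<exists>N. \<forall>k\<ge>N. (Tmap m n ^^ (k + P)) e0 = (Tmap m n ^^ k) e0)) \<longleftrightarrow> (0 < P \<and> Dp n (int m) P)" for P
  proof -
    have "(Tmap m n ^^ (k + P)) e0 = (Tmap m n ^^ k) e0 \<longleftrightarrow> inI (int m) n (cc ^ k * (cc ^ P - 1))" for k
      using period_iff[OF m1 n e0_vecs[OF m n], of k P] unfolding Avec_e0[OF n] mult_1_right .
    then have "(\<exists>N. \<forall>k\<ge>N. (Tmap m n ^^ (k + P)) e0 = (Tmap m n ^^ k) e0) \<longleftrightarrow> (\<exists>N. \<forall>k\<ge>N. inI (int m) n (cc ^ k * (cc ^ P - 1)))"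
      by presburger
    also have "\<dots> \<longleftrightarrow> Dp n (int m) P"
      unfolding Dp_def using inI_mono_N by blast
    finally show ?thesis by blast
  qed
  show ?thesis unfolding cycle_len_def per_def key ..
qed

lemma cycle_le:
  assumes m: "m \<ge> 2" and n: "n \<ge> 1" and a: "a \<in> vecs m n" and D: "Dp n (int m) P" and P: "P > 0"
  shows "cycle_len m n a \<le> P"
proof -
  have m1: "m \<ge> 1" using m by simp
  obtain N where N: "inI (int m) n (cc ^ N * (cc ^ P - 1))" using D unfolding Dp_def by blast
  have "\<forall>k\<ge>N. (Tmap m n ^^ (k + P)) a = (Tmap m n ^^ k) a"
  proof (intro allI impI)
    fix k assume "k \<ge> N"
    then have "inI (int m) n (cc ^ k * (cc ^ P - 1))" using N inI_mono_N by blast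
    then have "inI (int m) n (cc ^ k * (cc ^ P - 1) * Avec n a)" by (rule inI_mult_right)
    then show "(Tmap m n ^^ (k + P)) a = (Tmap m n ^^ k) a" using period_iff[OF m1 n a] by blast
  qed
  then have "0 < P \<and> (\<exists>N. \<forall>k\<ge>N. (Tmap m n ^^ (k + P)) a = (Tmap m n ^^ k) a)" using P by blast
  then show ?thesis unfolding cycle_len_def by (rule Least_le)
qed

lemma Pmax_per:
  assumes m: "m \<ge> 2" and n: "n \<ge> 1" and ex: "\<exists>P>0. Dp n (int m) P"
  shows "Pmax m n = per n (int m)"
proof -
  note PP = per_props[OF ex]
  have le: "y \<le> per n (int m)" if "y \<in> cycle_len m n ` vecs m n" for y
    using that cycle_le[OF m n _ PP(2) PP(1)] by blast
  have fin: "finite (cycle_len m n ` vecs m n)"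
    by (rule finite_subset[of _ "{..per n (int m)}"]) (use le in blast, simp)
  have mem: "per n (int m) \<in> cycle_len m n ` vecs m n"
    unfolding cycle_e0[OF m n, symmetric] by (rule imageI[OF e0_vecs[OF m n]])
  show ?thesis unfolding Pmax_def by (rule Max_eqI[OF fin le mem])
qed

lemma Pmax_1: "Pmax 1 n = 1"
proof -
  define z :: "nat \<Rightarrow> nat" where "z = (\<lambda>_. 0)"
  have V: "vecs 1 n = {z}"
  proof (intro equalityI subsetI)
    fix x
    assume x: "x \<in> vecs 1 n"
    have "x i = 0" for i using x unfolding vecs_def by (cases "i < n") auto
    then show "x \<in> {z}" by (simp add: z_def fun_eq_iff)
  next
    fix x
    assume "x \<in> {z}" then show "x \<in> vecs 1 n" by (simp add: vecs_def z_def)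
  qed
  have Tz: "(Tmap 1 n ^^ k) z = z" for k
    by (induction k) (auto simp: Tmap_def z_def)
  have "cycle_len 1 n z = 1"
  proof -
    have "\<forall>k\<ge>0. (Tmap 1 n ^^ (k + 1)) z = (Tmap 1 n ^^ k) z" using Tz by presburger
    then have "0 < (1::nat) \<and> (\<exists>N. \<forall>k\<ge>N. (Tmap 1 n ^^ (k + 1)) z = (Tmap 1 n ^^ k) z)" by blast
    then have "cycle_len 1 n z \<le> 1" unfolding cycle_len_def by (rule Least_le)
    moreover have "cycle_len 1 n z \<noteq> 0"
    proof
      assume "cycle_len 1 n z = 0"
      moreover have "0 < cycle_len 1 n z"
        unfolding cycle_len_def by (rule LeastI2_ex) (use \<open>0 < (1::nat) \<and> _\<close> in blast, blast)
      ultimately show False by simp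
    qed
    ultimately show ?thesis by simp
  qed
  then show ?thesis unfolding Pmax_def V by simp
qed

theorem main:
  fixes m n :: nat
  assumes "0 < m" and "0 < n"
    and "\<forall>p\<in>prime_factors m. odd p \<and> \<not> wieferich p"
  shows "Pmax m n = Lcm ((\<lambda>p. p ^ (multiplicity p m - 1) * Pmax p n) ` prime_factors m)"
proof (cases "m = 1")
  case True then show ?thesis unfolding True Pmax_1 by simp
next
  case False
  with assms(1) have m2: "m \<ge> 2" by simp
  have n1: "n \<ge> 1" using assms(2) by simp
  define S where "S = prime_factors m"
  define g where "g p = int p ^ multiplicity p m" for p
  have finS: "finite S" unfolding S_def by simp
  have Sp: "prime p" "p \<ge> 3" "\<not> wieferich p" "multiplicity p m \<ge> 1" if "p \<in> S" for p
  proof -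
    show pr: "prime p" using that unfolding S_def by auto
    have "odd p" "\<not> wieferich p" using assms(3) that unfolding S_def by auto
    then show "\<not> wieferich p" by simp
    have "p \<ge> 2" using pr prime_ge_2_nat by blast
    moreover have "p \<noteq> 2" using \<open>odd p\<close> by auto
    ultimately show "p \<ge> 3" by simp
    show "multiplicity p m \<ge> 1" using that assms(1) unfolding S_def
      by (simp add: prime_factors_multiplicity Suc_le_eq)
  qed
  have exg: "\<exists>P>0. Dp n (g p) P" if "p \<in> S" for p
    unfolding g_def using PP(1)[OF Sp(1-3)[OF that] n1 Sp(4)[OF that]] .
  have perg: "per n (g p) = p ^ (multiplicity p m - 1) * per n (int p)" if "p \<in> S" for p
    unfolding g_def using PP(2)[OF Sp(1-3)[OF that] n1 Sp(4)[OF that]] .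
  have Pmp: "Pmax p n = per n (int p)" if "p \<in> S" for p
  proof -
    have "\<exists>P>0. Dp n (int p ^ 1) P" using PP(1)[OF Sp(1-3)[OF that] n1, of 1] by simp
    then have "\<exists>P>0. Dp n (int p) P" by simp
    moreover have "p \<ge> 2" using Sp(2)[OF that] by simp
    ultimately show ?thesis using Pmax_per n1 by blast
  qed
  have RHS: "(\<lambda>p. p ^ (multiplicity p m - 1) * Pmax p n) ` prime_factors m = (\<lambda>p. per n (g p)) ` S"
    unfolding S_def by (rule image_cong) (simp_all add: Pmp perg S_def)
  define L where "L = Lcm ((\<lambda>p. per n (g p)) ` S)"
  have Lpos: "L > 0"
  proof -
    have "0 \<notin> (\<lambda>p. per n (g p)) ` S" using per_props(1)[OF exg] by fastforce
    then have "L \<noteq> 0" unfolding L_def using Lcm_0_iff_nat[of "(\<lambda>p. per n (g p)) ` S"] finS by simp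
    then show ?thesis by simp
  qed
  have DgL: "\<forall>p\<in>S. Dp n (g p) L"
  proof
    fix p assume "p \<in> S"
    have "per n (g p) dvd L" unfolding L_def using \<open>p \<in> S\<close> by (intro dvd_Lcm) simp
    then show "Dp n (g p) L" using per_props(3)[OF exg[OF \<open>p \<in> S\<close>]] by blast
  qed
  have cop: "\<forall>s\<in>S. \<forall>s'\<in>S. s \<noteq> s' \<longrightarrow> coprime (g s) (g s')"
  proof (intro ballI impI)
    fix s s' assume "s \<in> S" "s' \<in> S" "s \<noteq> s'"
    then have "coprime s s'" using primes_coprime Sp(1) by blast
    then have "coprime (int s) (int s')" by (simp add: coprime_int_iff)
    then show "coprime (g s) (g s')" unfolding g_def by (simp add: coprime_power_left_iff coprime_power_right_iff)
  qed
  have mprod: "int m = (\<Prod>p\<in>S. g p)"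
  proof -
    have "(\<Prod>p\<in>S. p ^ multiplicity p m) = m" unfolding S_def using prod_prime_factors[of m] assms(1) by simp
    then have "int m = int (\<Prod>p\<in>S. p ^ multiplicity p m)" by simp
    also have "\<dots> = (\<Prod>p\<in>S. g p)" unfolding g_def by (simp add: int_prod)
    finally show ?thesis .
  qed
  have DmL: "Dp n (int m) L" unfolding mprod by (rule Dp_prod_coprime[OF finS cop DgL])
  have exm: "\<exists>P>0. Dp n (int m) P" using DmL Lpos by blast
  note Pm = per_props[OF exm]
  have Pmax_m: "Pmax m n = per n (int m)" by (rule Pmax_per[OF m2 n1 exm])
  have d1: "per n (int m) dvd L" using Pm(3) DmL by blast
  have d2: "L dvd per n (int m)" unfolding L_def
  proof (rule Lcm_least)
    fix b assume "b \<in> (\<lambda>p. per n (g p)) ` S"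
    then obtain p where p: "p \<in> S" "b = per n (g p)" by blast
    have "g p dvd int m" unfolding g_def by (simp add: multiplicity_dvd flip: of_nat_power)
    then have "Dp n (g p) (per n (int m))" using Dp_dvd_mod Pm(2) by blast
    then show "b dvd per n (int m)" using per_props(3)[OF exg[OF p(1)]] p(2) by blast
  qed
  have "per n (int m) = L" using d1 d2 by (rule dvd_antisym)
  then show ?thesis unfolding Pmax_m RHS L_def by simp
qed

theorem theorem1p6:
  fixes m n :: nat
  assumes "0 < m" and "0 < n"
    and "\<forall>p\<in>prime_factors m. odd p \<and> \<not> wieferich p"
  shows "Pmax m n = Lcm ((\<lambda>p. p ^ (multiplicity p m - 1) * Pmax p n) ` prime_factors m)"
  by (rule main[OF assms])

end
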